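(* Let $\mathfrak g=\mathbb R f_1\ltimes_M\mathfrak u$ be a real almost abelian Lie algebra, where $\mathfrak u$ is an abelian ideal of codimension one and $M=\operatorname{ad}_{f_1}|_{\mathfrak u}$, endowed with an LCS structure $(\omega,\theta)$. If $M$ is invertible, then the LCS structure is of the second kind.
   Context: An LCS structure on $\mathfrak g$ is a pair $(\omega,\theta)$ with $\omega\in\Lambda^2\mathfrak g^*$ non-degenerate and $\theta\in\mathfrak g^*$ closed and nonzero, such that $d\omega=\theta\wedge\omega$. Let $\mathfrak g_\omega=\{x\in\mathfrak g:\ \omega([x,y],z)+\omega(y,[x,z])=0\ \text{for all }y,z\in\mathfrak g\}$. The LCS structure is of the first kind if $\theta|_{\mathfrak g_\omega}$ is surjective onto $\mathbb R$, and of the second kind if $\theta|_{\mathfrak g_\omega}\equiv0$. *)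

theory Defs
  imports "HOL-Analysis.Analysis"
begin

text \<open>The almost abelian Lie algebra g = R f1 \<ltimes>_M u, modelled on real \<times> 'u,
  where f1 = (1,0), u = {0} \<times> 'u (abelian ideal) and ad_{f1}|_u = M.\<close>
definition aa_bracket :: "('u::real_vector \<Rightarrow> 'u) \<Rightarrow> real \<times> 'u \<Rightarrow> real \<times> 'u \<Rightarrow> real \<times> 'u" where
  "aa_bracket M p q = (0, fst p *\<^sub>R M (snd q) - fst q *\<^sub>R M (snd p))"

text \<open>Exterior derivative with the Chevalley--Eilenberg convention:
  (d\<omega>)(x,y,z) = -\<omega>([x,y],z) - \<omega>([y,z],x) - \<omega>([z,x],y),
  (\<theta>\<and>\<omega>)(x,y,z) = \<theta>(x)\<omega>(y,z) + \<theta>(y)\<omega>(z,x) + \<theta>(z)\<omega>(x,y),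
  d\<theta>(x,y) = -\<theta>([x,y]).\<close>
definition lcs_structure ::
  "('g::real_vector \<Rightarrow> 'g \<Rightarrow> 'g) \<Rightarrow> ('g \<Rightarrow> 'g \<Rightarrow> real) \<Rightarrow> ('g \<Rightarrow> real) \<Rightarrow> bool" where
  "lcs_structure br \<omega> \<theta> \<longleftrightarrow>
     bilinear \<omega> \<and> (\<forall>x. \<omega> x x = 0) \<and> (\<forall>x. (\<forall>y. \<omega> x y = 0) \<longrightarrow> x = 0) \<and>
     linear \<theta> \<and> (\<forall>x y. \<theta> (br x y) = 0) \<and> \<theta> \<noteq> (\<lambda>_. 0) \<and>
     (\<forall>x y z. - \<omega> (br x y) z - \<omega> (br y z) x - \<omega> (br z x) y
               = \<theta> x * \<omega> y z + \<theta> y * \<omega> z x + \<theta> z * \<omega> x y)"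

definition g_omega :: "('g \<Rightarrow> 'g \<Rightarrow> 'g) \<Rightarrow> ('g \<Rightarrow> 'g \<Rightarrow> real) \<Rightarrow> 'g set" where
  "g_omega br \<omega> = {x. \<forall>y z. \<omega> (br x y) z + \<omega> y (br x z) = 0}"

definition lcs_first_kind :: "('g \<Rightarrow> 'g \<Rightarrow> 'g) \<Rightarrow> ('g \<Rightarrow> 'g \<Rightarrow> real) \<Rightarrow> ('g \<Rightarrow> real) \<Rightarrow> bool" where
  "lcs_first_kind br \<omega> \<theta> \<longleftrightarrow> \<theta> ` g_omega br \<omega> = UNIV"

definition lcs_second_kind :: "('g \<Rightarrow> 'g \<Rightarrow> 'g) \<Rightarrow> ('g \<Rightarrow> 'g \<Rightarrow> real) \<Rightarrow> ('g \<Rightarrow> real) \<Rightarrow> bool" where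
  "lcs_second_kind br \<omega> \<theta> \<longleftrightarrow> (\<forall>x \<in> g_omega br \<omega>. \<theta> x = 0)"

end

theory Submission
  imports Defs
begin

theorem lemma4p7:
  fixes M :: "'u::euclidean_space \<Rightarrow> 'u"
    and \<omega> :: "real \<times> 'u \<Rightarrow> real \<times> 'u \<Rightarrow> real"
    and \<theta> :: "real \<times> 'u \<Rightarrow> real"
  assumes "linear M"
    and "lcs_structure (aa_bracket M) \<omega> \<theta>"
    and "bij M"
  shows "lcs_second_kind (aa_bracket M) \<omega> \<theta>"
proof -
  let ?br = "aa_bracket M"
  note L = assms(2)[unfolded lcs_structure_def]
  have bil: "bilinear \<omega>" using L by blast
  have alt: "\<And>x. \<omega> x x = 0" using L by blast
  have nd: "\<And>x. (\<forall>y. \<omega> x y = 0) \<Longrightarrow> x = 0" using L by blast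
  have lt: "linear \<theta>" using L by blast
  have tb: "\<And>x y. \<theta> (?br x y) = 0" using L by blast
  have tnz: "\<theta> \<noteq> (\<lambda>_. 0)" using L by blast
  have dw: "\<And>x y z. - \<omega> (?br x y) z - \<omega> (?br y z) x - \<omega> (?br z x) y
               = \<theta> x * \<omega> y z + \<theta> y * \<omega> z x + \<theta> z * \<omega> x y" using L by blast
  have M0: "M 0 = 0" using assms(1) linear_0 by blast
  have sur: "\<And>w. \<exists>u. M u = w" using assms(3) by (metis bij_pointE)
  have lr: "\<And>x. linear (\<omega> x)" using bil unfolding bilinear_def by blast
  have ll: "\<And>y. linear (\<lambda>x. \<omega> x y)" using bil unfolding bilinear_def by blast
  have radd: "\<And>x y z. \<omega> x (y + z) = \<omega> x y + \<omega> x z" using lr linear_add by blast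
  have rsc: "\<And>x c y. \<omega> x (c *\<^sub>R y) = c * \<omega> x y" using lr linear_scale by fastforce
  have ladd: "\<And>x y z. \<omega> (y + z) x = \<omega> y x + \<omega> z x"
    using ll linear_add by fastforce
  have lsc: "\<And>x c y. \<omega> (c *\<^sub>R y) x = c * \<omega> y x"
    using ll linear_scale by fastforce
  have l0: "\<And>z. \<omega> 0 z = 0" by (metis lsc scale_zero_left mult_zero_left)
  have r0: "\<And>z. \<omega> z 0 = 0" by (metis rsc scale_zero_left mult_zero_left)
  have anti: "\<And>x y. \<omega> x y = - \<omega> y x"
  proof -
    fix x y
    have "\<omega> (x+y) (x+y) = 0" by (rule alt)
    then show "\<omega> x y = - \<omega> y x" using alt[of x] alt[of y] by (simp add: ladd radd)
  qed
  have lneg: "\<And>x y. \<omega> (- y) x = - \<omega> y x" 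
  proof -
    fix x y
    have "\<omega> ((-1) *\<^sub>R y) x = (-1) * \<omega> y x" by (rule lsc)
    then show "\<omega> (- y) x = - \<omega> y x" by simp
  qed
  have th0: "\<And>w. \<theta> (0, w) = 0"
  proof -
    fix w
    obtain u where "M u = w" using sur by blast
    then have "?br (1,0) (0,u) = (0,w)" by (simp add: aa_bracket_def M0)
    then show "\<theta> (0, w) = 0" using tb by metis
  qed
  have tadd: "\<And>x y. \<theta> (x+y) = \<theta> x + \<theta> y" using lt linear_add by blast
  have tsc: "\<And>c x. \<theta> (c *\<^sub>R x) = c * \<theta> x" using lt linear_scale by fastforce
  have tform: "\<And>a v. \<theta> (a, v) = a * \<theta> (1, 0)"
  proof -
    fix a v
    have "(a, v) = a *\<^sub>R (1::real, 0::'u) + (0, v)" by simp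
    then have "\<theta> (a, v) = \<theta> (a *\<^sub>R (1::real, 0::'u)) + \<theta> (0, v)" using tadd by metis
    then show "\<theta> (a, v) = a * \<theta> (1, 0)" by (simp only: tsc th0)
  qed
  have cnz: "\<theta> (1, 0) \<noteq> 0"
  proof
    assume "\<theta> (1, 0) = 0"
    then have "\<theta> = (\<lambda>_. 0)" 
    proof (intro ext)
      fix p :: "real \<times> 'u"
      obtain a v where "p = (a, v)" by fastforce
      then show "\<theta> p = 0" using tform[of a v] \<open>\<theta> (1, 0) = 0\<close> by simp
    qed
    then show False using tnz by simp
  qed
  show ?thesis unfolding lcs_second_kind_def
  proof (rule ccontr)
    assume "\<not> (\<forall>x\<in>g_omega ?br \<omega>. \<theta> x = 0)"
    then obtain x where xg: "x \<in> g_omega ?br \<omega>" and tx: "\<theta> x \<noteq> 0" by blast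
    obtain a v where xe: "x = (a, v)" by fastforce
    have a0: "a \<noteq> 0" using tx tform[of a v] xe by auto
    have gw: "\<And>y z. \<omega> (?br x y) z + \<omega> y (?br x z) = 0" using xg unfolding g_omega_def by blast
    have uu: "\<And>u1 u2. \<omega> (0,u1) (0,u2) = 0"
    proof -
      fix u1 u2
      have b1: "?br x (0,u1) = (0, a *\<^sub>R M u1)" by (simp add: aa_bracket_def xe)
      have b2: "?br (0,u1) (0,u2) = 0" by (simp add: aa_bracket_def zero_prod_def)
      have b3: "?br (0,u2) x = - (0, a *\<^sub>R M u2)" by (simp add: aa_bracket_def xe)
      have b4: "?br x (0,u2) = (0, a *\<^sub>R M u2)" by (simp add: aa_bracket_def xe)
      have e1: "- \<omega> (0, a *\<^sub>R M u1) (0,u2) - 0 + \<omega> (0, a *\<^sub>R M u2) (0,u1)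
               = \<theta> x * \<omega> (0,u1) (0,u2)"
        using dw[of x "(0,u1)" "(0,u2)"] unfolding b1 b2 b3 by (simp only: l0 lneg th0)
      have e2: "\<omega> (0, a *\<^sub>R M u1) (0,u2) + \<omega> (0,u1) (0, a *\<^sub>R M u2) = 0"
        using gw[of "(0,u1)" "(0,u2)"] unfolding b1 b4 .
      have "\<theta> x * \<omega> (0,u1) (0,u2) = 0" using e1 e2 anti[of "(0,u1)" "(0, a *\<^sub>R M u2)"] by simp
      then show "\<omega> (0,u1) (0,u2) = 0" using tx by simp
    qed
    have xw: "\<And>w. \<omega> x (0,w) = 0"
    proof -
      fix w
      obtain u where mu: "M u = (1/a) *\<^sub>R w" using sur by blast
      have b1: "?br x (0,u) = (0, w)" using a0 by (simp add: aa_bracket_def xe mu)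
      have b2: "?br x x = 0" by (simp add: aa_bracket_def xe zero_prod_def)
      show "\<omega> x (0,w) = 0" using gw[of x "(0,u)"] unfolding b1 b2 by (simp add: l0)
    qed
    have allz: "\<And>w::'u. (0::real, w) = 0"
    proof -
      fix w :: 'u
      have "\<forall>y. \<omega> (0::real, w) (y::real \<times> 'u) = 0"
      proof (rule allI)
        fix y :: "real \<times> 'u"
        obtain b u' where ye: "y = (b, u')" by fastforce
        have "y = (b/a) *\<^sub>R x + (0, u' - (b/a) *\<^sub>R v)" using a0 by (simp add: ye xe)
        then have "\<omega> (0,w) y = (b/a) * \<omega> (0,w) x + \<omega> (0,w) (0, u' - (b/a) *\<^sub>R v)"
          by (simp only: radd rsc)
        also have "\<dots> = 0" using uu[of w] xw anti[of "(0,w)" x] by simp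
        finally show "\<omega> (0,w) y = 0" .
      qed
      then show "(0::real, w) = 0" by (rule nd)
    qed
    obtain e :: 'u where "e \<in> Basis" using nonempty_Basis by blast
    then have "e \<noteq> 0" by auto
    then show False using allz[of e] by (simp add: zero_prod_def)
  qed
qed

end
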